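(* Let $n\ge 2$, $p\in[0,1]$ and let $\Phi$ be the $\mathfrak{su}_n$ channel. Then $$S_{\min}:=\min_{\rho}S(\Phi(\rho))=-\frac{np}{n+1}\ln\Big(\frac{np}{n^2-1}\Big)-\Big(1-\frac{np}{n+1}\Big)\ln\Big(1-\frac{np}{n+1}\Big),$$ where the minimum is over all $n\times n$ density matrices and $S(\sigma)=-\operatorname{Tr}(\sigma\ln\sigma)$ is the von Neumann entropy (with $0\ln 0=0$). Moreover, for fixed $p\in[0,1]$, $\lim_{n\to\infty}S_{\min}/\ln n=p$.
   Context: The $\mathfrak{su}_n$ channel is $\Phi(\rho)=(1-p)\rho+\frac{pn}{2(n^2-1)}\sum_{i=1}^{n^2-1}X_i\rho X_i$, where $X_1,\dots,X_{n^2-1}$ are traceless Hermitian $n\times n$ matrices forming a basis of $i\,\mathfrak{su}_n$ with $\operatorname{Tr}(X_iX_j)=2\delta_{ij}$ (generalized Gell-Mann matrices). A density matrix is a positive semidefinite matrix of trace 1. *)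

theory Defs
  imports Complex_Main "Jordan_Normal_Form.Schur_Decomposition" "HOL-Computational_Algebra.Polynomial"
begin

definition mtrace :: "complex mat \<Rightarrow> complex" where
  "mtrace A = (\<Sum>i<dim_row A. A $$ (i, i))"

definition psd_mat :: "nat \<Rightarrow> complex mat \<Rightarrow> bool" where
  "psd_mat n A \<longleftrightarrow> A \<in> carrier_mat n n \<and> mat_adjoint A = A \<and>
     (\<forall>v \<in> carrier_vec n. 0 \<le> Re (conjugate v \<bullet> (A *\<^sub>v v)))"

definition density_mat :: "nat \<Rightarrow> complex mat \<Rightarrow> bool" where
  "density_mat n \<rho> \<longleftrightarrow> psd_mat n \<rho> \<and> mtrace \<rho> = 1"

definition xlnx :: "real \<Rightarrow> real" where
  "xlnx x = (if x = 0 then 0 else x * ln x)"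

definition eigenvalues_mset :: "complex mat \<Rightarrow> complex multiset" where
  "eigenvalues_mset A = proots (char_poly A)"

(* von Neumann entropy S(sigma) = - Tr(sigma ln sigma) = - sum_lambda lambda ln lambda *)
definition vN_entropy :: "complex mat \<Rightarrow> real" where
  "vN_entropy \<sigma> = - (\<Sum>x\<in>#eigenvalues_mset \<sigma>. xlnx (Re x))"

(* generalized Gell-Mann matrices (0-based indices), normalised Tr(X_i X_j) = 2 delta_ij *)
definition gm_sym :: "nat \<Rightarrow> nat \<Rightarrow> nat \<Rightarrow> complex mat" where
  "gm_sym n j k = mat n n (\<lambda>(a, b). if (a = j \<and> b = k) \<or> (a = k \<and> b = j) then 1 else 0)"

definition gm_asym :: "nat \<Rightarrow> nat \<Rightarrow> nat \<Rightarrow> complex mat" where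
  "gm_asym n j k = mat n n (\<lambda>(a, b). if a = j \<and> b = k then - \<i> else if a = k \<and> b = j then \<i> else 0)"

definition gm_diag :: "nat \<Rightarrow> nat \<Rightarrow> complex mat" where
  "gm_diag n l = mat n n (\<lambda>(a, b).
     if a = b \<and> a < l then complex_of_real (sqrt (2 / (real l * (real l + 1))))
     else if a = b \<and> a = l then - complex_of_real (real l * sqrt (2 / (real l * (real l + 1))))
     else 0)"

definition gell_mann :: "nat \<Rightarrow> complex mat set" where
  "gell_mann n = {gm_sym n j k | j k. j < k \<and> k < n} \<union> {gm_asym n j k | j k. j < k \<and> k < n}
     \<union> {gm_diag n l | l. 1 \<le> l \<and> l \<le> n - 1}"

definition su_channel :: "nat \<Rightarrow> real \<Rightarrow> complex mat \<Rightarrow> complex mat" where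
  "su_channel n p \<rho> =
     (complex_of_real (1 - p)) \<cdot>\<^sub>m \<rho> +
     (complex_of_real (p * real n / (2 * (real n ^ 2 - 1)))) \<cdot>\<^sub>m
       mat n n (\<lambda>ij. \<Sum>X\<in>gell_mann n. (X * \<rho> * X) $$ ij)"

definition S_min :: "nat \<Rightarrow> real \<Rightarrow> real" where
  "S_min n p = (INF \<rho>\<in>{\<rho>. density_mat n \<rho>}. vN_entropy (su_channel n p \<rho>))"

end

theory Submission
  imports Defs "HOL-Real_Asymp.Real_Asymp"
begin

lemma mult3_entry:
  fixes X R :: "complex mat"
  assumes "X \<in> carrier_mat n n" "R \<in> carrier_mat n n" "a < n" "b < n"
  shows "(X * R * X) $$ (a, b) = (\<Sum>c<n. \<Sum>d<n. X $$ (a, c) * R $$ (c, d) * X $$ (d, b))"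
proof -
  have XR: "X * R \<in> carrier_mat n n" using assms by simp
  have "(X * R * X) $$ (a, b) = (\<Sum>d<n. (X * R) $$ (a, d) * X $$ (d, b))"
    using assms XR by (subst index_mult_mat) (auto simp: scalar_prod_def lessThan_atLeast0)
  also have "\<dots> = (\<Sum>d<n. \<Sum>c<n. X $$ (a, c) * R $$ (c, d) * X $$ (d, b))"
  proof (rule sum.cong[OF refl])
    fix d assume "d \<in> {..<n}"
    then have "(X * R) $$ (a, d) = (\<Sum>c<n. X $$ (a, c) * R $$ (c, d))"
      using assms by (subst index_mult_mat) (auto simp: scalar_prod_def lessThan_atLeast0)
    then show "(X * R) $$ (a, d) * X $$ (d, b) = (\<Sum>c<n. X $$ (a, c) * R $$ (c, d) * X $$ (d, b))"
      by (simp add: sum_distrib_right)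
  qed
  also have "\<dots> = (\<Sum>c<n. \<Sum>d<n. X $$ (a, c) * R $$ (c, d) * X $$ (d, b))"
    by (rule sum.swap)
  finally show ?thesis .
qed

definition sl :: "nat \<Rightarrow> real" where "sl l = sqrt (2 / (real l * (real l + 1)))"
definition dl :: "nat \<Rightarrow> nat \<Rightarrow> real" where
  "dl l a = (if a < l then sl l else if a = l then - (real l * sl l) else 0)"

lemma sl_sq: "l \<ge> 1 \<Longrightarrow> sl l * sl l = 2 / (real l * (real l + 1))"
  unfolding sl_def by (simp add: pos_add_strict)

lemma dl_base:
  assumes "a \<le> b"
  shows "(\<Sum>l\<in>{1..<Suc b}. dl l a * dl l b) = (if a = b then 2 else 0) - 2 / (real b + 1)"
proof (cases b)
  case 0 then show ?thesis using assms by simp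
next
  case (Suc m)
  have "(\<Sum>l\<in>{1..<Suc b}. dl l a * dl l b) = (\<Sum>l\<in>{1..<b}. dl l a * dl l b) + dl b a * dl b b"
    using Suc by simp
  also have "(\<Sum>l\<in>{1..<b}. dl l a * dl l b) = 0"
    by (rule sum.neutral) (auto simp: dl_def)
  finally have e: "(\<Sum>l\<in>{1..<Suc b}. dl l a * dl l b) = dl b a * dl b b" by simp
  have b1: "b \<ge> 1" using Suc by simp
  show ?thesis
  proof (cases "a = b")
    case True
    have "dl b a * dl b b = real b * real b * (sl b * sl b)" using True by (simp add: dl_def)
    also have "\<dots> = 2 - 2 / (real b + 1)" using b1 sl_sq[OF b1]
      by (simp add: divide_simps) (simp add: algebra_simps)
    finally show ?thesis using e True by simp
  next
    case False
    then have "a < b" using assms by simp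
    then have "dl b a * dl b b = - real b * (sl b * sl b)" by (simp add: dl_def)
    also have "\<dots> = - 2 / (real b + 1)" using b1 sl_sq[OF b1]
      by (simp add: divide_simps) (simp add: algebra_simps)
    finally show ?thesis using e False by simp
  qed
qed

lemma dl_sum_le:
  assumes "a \<le> b"
  shows "(\<Sum>l\<in>{1..<Suc b + k}. dl l a * dl l b) = (if a = b then 2 else 0) - 2 / (real (Suc b + k))"
proof (induction k)
  case 0 then show ?case using dl_base[OF assms] by (simp add: add.commute)
next
  case (Suc k)
  let ?m = "Suc b + k"
  have "{1..<Suc b + Suc k} = insert ?m {1..<?m}" by auto
  then have "(\<Sum>l\<in>{1..<Suc b + Suc k}. dl l a * dl l b) = dl ?m a * dl ?m b + (\<Sum>l\<in>{1..<?m}. dl l a * dl l b)"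
    by simp
  also have "dl ?m a * dl ?m b = sl ?m * sl ?m" using assms by (simp add: dl_def)
  also have "\<dots> = 2 / (real ?m * (real ?m + 1))" by (rule sl_sq) simp
  finally have "(\<Sum>l\<in>{1..<Suc b + Suc k}. dl l a * dl l b) = 2 / (real ?m * (real ?m + 1)) + ((if a = b then 2 else 0) - 2 / real ?m)"
    using Suc.IH by simp
  moreover have "2 / (real ?m * (real ?m + 1)) - 2 / real ?m = - 2 / (real ?m + 1)"
    by (simp add: divide_simps) (simp add: algebra_simps)
  ultimately show ?case by (simp add: algebra_simps)
qed

lemma dl_sum:
  assumes "a < n" "b < n"
  shows "(\<Sum>l\<in>{1..<n}. dl l a * dl l b) = (if a = b then 2 else 0) - 2 / real n"
proof -
  have sym: "\<And>a b. a \<le> b \<Longrightarrow> b < n \<Longrightarrow> (\<Sum>l\<in>{1..<n}. dl l a * dl l b) = (if a = b then 2 else 0) - 2 / real n"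
  proof -
    fix a b assume ab: "a \<le> b" "b < n"
    define k where "k = n - Suc b"
    have "n = Suc b + k" using ab unfolding k_def by simp
    then show "(\<Sum>l\<in>{1..<n}. dl l a * dl l b) = (if a = b then 2 else 0) - 2 / real n"
      using dl_sum_le[OF ab(1)] by simp
  qed
  show ?thesis
  proof (cases "a \<le> b")
    case True then show ?thesis using sym assms by simp
  next
    case False
    then have "(\<Sum>l\<in>{1..<n}. dl l b * dl l a) = (if b = a then 2 else 0) - 2 / real n" using sym assms by simp
    moreover have "(\<Sum>l\<in>{1..<n}. dl l b * dl l a) = (\<Sum>l\<in>{1..<n}. dl l a * dl l b)"
      by (simp add: mult.commute)
    moreover have "(if b = a then 2 else 0) = (if a = b then (2::real) else 0)" by auto
    ultimately show ?thesis by simp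
  qed
qed


lemma sl_pos: "l \<ge> 1 \<Longrightarrow> sl l > 0"
  unfolding sl_def by (simp add: pos_add_strict)

lemma gm_sym_entry: "a < n \<Longrightarrow> c < n \<Longrightarrow>
  gm_sym n j k $$ (a, c) = (if (a = j \<and> c = k) \<or> (a = k \<and> c = j) then 1 else 0)"
  unfolding gm_sym_def by simp

lemma gm_asym_entry: "a < n \<Longrightarrow> c < n \<Longrightarrow>
  gm_asym n j k $$ (a, c) = (if a = j \<and> c = k then - \<i> else if a = k \<and> c = j then \<i> else 0)"
  unfolding gm_asym_def by simp

lemma gm_diag_entry: "a < n \<Longrightarrow> c < n \<Longrightarrow>
  gm_diag n l $$ (a, c) = (if a = c then complex_of_real (dl l a) else 0)"
  unfolding gm_diag_def dl_def sl_def by simp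

lemma sym_asym_pair:
  fixes j k a c d b :: nat
  assumes "j < k"
  shows "(if (a = j \<and> c = k) \<or> (a = k \<and> c = j) then 1 else 0) * (if (d = j \<and> b = k) \<or> (d = k \<and> b = j) then 1 else 0)
    + (if a = j \<and> c = k then - \<i> else if a = k \<and> c = j then \<i> else 0) * (if d = j \<and> b = k then - \<i> else if d = k \<and> b = j then \<i> else 0)
    = (if (j, k) = (a, c) then (if d = c \<and> b = a then 2 else 0) else 0)
    + (if (j, k) = (c, a) then (if d = c \<and> b = a then 2 else (0::complex)) else 0)"
proof (cases "(a = j \<and> c = k) \<or> (a = k \<and> c = j)")
  case True
  have h2: "(d = j \<and> b = k) \<or> (d = k \<and> b = j) \<or> (\<not> (d = j \<and> b = k) \<and> \<not> (d = k \<and> b = j))" by blast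
  from True h2 show ?thesis using assms by (elim disjE conjE) simp_all
next
  case False
  have e1: "((a = j \<and> c = k) \<or> (a = k \<and> c = j)) = False" "(a = j \<and> c = k) = False" "(a = k \<and> c = j) = False"
    "((j, k) = (a, c)) = False" "((j, k) = (c, a)) = False" using False by auto
  show ?thesis by (simp only: e1 if_False mult_zero_left add_0 simp_thms)
qed

definition PP :: "nat \<Rightarrow> (nat \<times> nat) set" where "PP n = {(j, k). j < k \<and> k < n}"

lemma finite_PP: "finite (PP n)"
  by (rule finite_subset[of _ "{..<n} \<times> {..<n}"]) (auto simp: PP_def)

lemma gell_mann_split: "gell_mann n = ((\<lambda>(j, k). gm_sym n j k) ` PP n \<union> (\<lambda>(j, k). gm_asym n j k) ` PP n) \<union> gm_diag n ` {1..<n}"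
proof -
  have 1: "{gm_sym n j k | j k. j < k \<and> k < n} = (\<lambda>(j, k). gm_sym n j k) ` PP n"
    unfolding PP_def by (auto simp: image_def)
  have 2: "{gm_asym n j k | j k. j < k \<and> k < n} = (\<lambda>(j, k). gm_asym n j k) ` PP n"
    unfolding PP_def by (auto simp: image_def)
  have 3: "{gm_diag n l | l. 1 \<le> l \<and> l \<le> n - 1} = gm_diag n ` {l. 1 \<le> l \<and> l \<le> n - 1}"
    by blast
  have 4: "{l. 1 \<le> l \<and> l \<le> n - 1} = {1..<n}" by auto
  note 3 = 3[unfolded 4]
  show ?thesis unfolding gell_mann_def 1 2 3 ..
qed

lemma gell_mann_carrier: "X \<in> gell_mann n \<Longrightarrow> X \<in> carrier_mat n n"
  unfolding gell_mann_split by (auto simp: gm_sym_def gm_asym_def gm_diag_def)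

lemma inj_sym: "inj_on (\<lambda>(j, k). gm_sym n j k) (PP n)"
proof (rule inj_onI, clarify)
  fix j k j' k' assume P: "(j, k) \<in> PP n" "(j', k') \<in> PP n" and e: "gm_sym n j k = gm_sym n j' k'"
  from e have "gm_sym n j k $$ (j, k) = gm_sym n j' k' $$ (j, k)" by simp
  then show "j = j' \<and> k = k'" using P by (auto simp: PP_def gm_sym_entry split: if_splits)
qed

lemma inj_asym: "inj_on (\<lambda>(j, k). gm_asym n j k) (PP n)"
proof (rule inj_onI, clarify)
  fix j k j' k' assume P: "(j, k) \<in> PP n" "(j', k') \<in> PP n" and e: "gm_asym n j k = gm_asym n j' k'"
  from e have "gm_asym n j k $$ (j, k) = gm_asym n j' k' $$ (j, k)" by simp
  then show "j = j' \<and> k = k'" using P by (auto simp: PP_def gm_asym_entry split: if_splits)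
qed

lemma inj_diag: "inj_on (gm_diag n) {1..<n}"
proof (rule inj_onI)
  have key: "gm_diag n l \<noteq> gm_diag n l'" if "l < l'" "l' < n" "1 \<le> l" for l l'
  proof
    assume "gm_diag n l = gm_diag n l'"
    then have "gm_diag n l $$ (l', l') = gm_diag n l' $$ (l', l')" by simp
    moreover have "sl l' > 0" using sl_pos[of l'] that by simp
    ultimately show False using that by (simp add: gm_diag_entry dl_def)
  qed
  fix l l' assume l: "l \<in> {1..<n}" "l' \<in> {1..<n}" and e: "gm_diag n l = gm_diag n l'"
  show "l = l'"
  proof (rule ccontr)
    assume "l \<noteq> l'"
    then have "l < l' \<or> l' < l" by arith
    then show False
    proof
      assume "l < l'" then show False using key[of l l'] l e by simp
    next
      assume "l' < l" then show False using key[of l' l] l e by simp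
    qed
  qed
qed

lemma disj_sym_asym: "(\<lambda>(j, k). gm_sym n j k) ` PP n \<inter> (\<lambda>(j, k). gm_asym n j k) ` PP n = {}"
proof (rule ccontr)
  assume "\<not> ?thesis"
  then obtain j k j' k' where P: "(j, k) \<in> PP n" "(j', k') \<in> PP n" and e: "gm_sym n j k = gm_asym n j' k'"
    by auto
  from e have ee: "gm_sym n j k $$ (j', k') = gm_asym n j' k' $$ (j', k')" by simp
  have "gm_asym n j' k' $$ (j', k') = - \<i>" using P by (simp add: PP_def gm_asym_entry)
  moreover have "gm_sym n j k $$ (j', k') \<in> {0, 1}" using P by (simp add: PP_def gm_sym_entry)
  moreover have "- \<i> \<notin> {0, 1::complex}" by (simp add: complex_eq_iff)
  ultimately show False using ee by simp
qed

lemma disj_diag: "((\<lambda>(j, k). gm_sym n j k) ` PP n \<union> (\<lambda>(j, k). gm_asym n j k) ` PP n) \<inter> gm_diag n ` {1..<n} = {}"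
proof (rule ccontr)
  assume "\<not> ?thesis"
  then obtain j k l where P: "(j, k) \<in> PP n" and e: "gm_diag n l = gm_sym n j k \<or> gm_diag n l = gm_asym n j k"
    by auto
  from e show False
  proof
    assume e1: "gm_diag n l = gm_sym n j k"
    have "gm_sym n j k $$ (j, k) = gm_diag n l $$ (j, k)" by (simp only: e1)
    then show False using P by (simp add: PP_def gm_sym_entry gm_diag_entry)
  next
    assume e1: "gm_diag n l = gm_asym n j k"
    have "gm_asym n j k $$ (j, k) = gm_diag n l $$ (j, k)" by (simp only: e1)
    then show False using P by (simp add: PP_def gm_asym_entry gm_diag_entry)
  qed
qed


lemma gm_complete:
  assumes abcd: "a < n" "b < n" "c < n" "d < n"
  shows "(\<Sum>X\<in>gell_mann n. X $$ (a, c) * X $$ (d, b)) =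
    (if a = b \<and> c = d then 2 else 0) - (if a = c \<and> d = b then 2 / of_nat n else (0::complex))"
proof -
  define g where "g = (\<lambda>X :: complex mat. X $$ (a, c) * X $$ (d, b))"
  define GS where "GS = (\<lambda>(j, k). gm_sym n j k) ` PP n"
  define GA where "GA = (\<lambda>(j, k). gm_asym n j k) ` PP n"
  define GD where "GD = gm_diag n ` {1..<n}"
  define T where "T = (if d = c \<and> b = a then 2 else (0::complex))"
  have fin: "finite GS" "finite GA" "finite GD" unfolding GS_def GA_def GD_def
    using finite_PP by auto
  have "sum g (gell_mann n) = sum g (GS \<union> GA) + sum g GD"
    unfolding gell_mann_split GS_def[symmetric] GA_def[symmetric] GD_def[symmetric]
    by (rule sum.union_disjoint) (use fin disj_diag[of n] in \<open>auto simp: GS_def GA_def GD_def\<close>)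
  also have "sum g (GS \<union> GA) = sum g GS + sum g GA"
    by (rule sum.union_disjoint) (use fin disj_sym_asym[of n] in \<open>auto simp: GS_def GA_def\<close>)
  also have "sum g GS = (\<Sum>x\<in>PP n. g (case x of (j, k) \<Rightarrow> gm_sym n j k))"
    unfolding GS_def by (subst sum.reindex[OF inj_sym]) (simp add: o_def)
  also have "sum g GA = (\<Sum>x\<in>PP n. g (case x of (j, k) \<Rightarrow> gm_asym n j k))"
    unfolding GA_def by (subst sum.reindex[OF inj_asym]) (simp add: o_def)
  also have "(\<Sum>x\<in>PP n. g (case x of (j, k) \<Rightarrow> gm_sym n j k)) + (\<Sum>x\<in>PP n. g (case x of (j, k) \<Rightarrow> gm_asym n j k))
     = (\<Sum>x\<in>PP n. (if x = (a, c) then T else 0) + (if x = (c, a) then T else 0))"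
    unfolding sum.distrib[symmetric]
  proof (rule sum.cong[OF refl], clarify)
    fix j k assume "(j, k) \<in> PP n"
    then have jk: "j < k" by (simp add: PP_def)
    show "g (gm_sym n j k) + g (gm_asym n j k) = (if (j, k) = (a, c) then T else 0) + (if (j, k) = (c, a) then T else 0)"
      unfolding g_def T_def using abcd
      by (simp only: gm_sym_entry gm_asym_entry sym_asym_pair[OF jk])
  qed
  also have "\<dots> = (if (a, c) \<in> PP n then T else 0) + (if (c, a) \<in> PP n then T else 0)"
    by (simp add: sum.distrib finite_PP)
  also have "sum g GD = (\<Sum>l\<in>{1..<n}. g (gm_diag n l))"
    unfolding GD_def by (subst sum.reindex[OF inj_diag]) (simp add: o_def)
  also have "\<dots> = (\<Sum>l\<in>{1..<n}. if a = c \<and> d = b then complex_of_real (dl l a * dl l d) else 0)"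
    by (rule sum.cong[OF refl]) (use abcd in \<open>simp add: g_def gm_diag_entry\<close>)
  also have "\<dots> = (if a = c \<and> d = b then complex_of_real (\<Sum>l\<in>{1..<n}. dl l a * dl l d) else 0)"
  proof (cases "a = c \<and> d = b")
    case False
    then have z: "(\<lambda>l. if a = c \<and> d = b then complex_of_real (dl l a * dl l d) else 0) = (\<lambda>l. 0)" by auto
    show ?thesis using False by (simp only: z) simp
  qed simp
  also have "\<dots> = (if a = c \<and> d = b then complex_of_real ((if a = d then 2 else 0) - 2 / real n) else 0)"
  proof -
    have "(\<Sum>l\<in>{1..<n}. dl l a * dl l d) = (if a = d then 2 else 0) - 2 / real n"
      using dl_sum[of a n d] abcd by simp
    then show ?thesis by (simp only:)
  qed
  finally have main: "sum g (gell_mann n) = (if (a, c) \<in> PP n then T else 0) + (if (c, a) \<in> PP n then T else 0)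
     + (if a = c \<and> d = b then complex_of_real ((if a = d then 2 else 0) - 2 / real n) else 0)" .
  have ofr: "complex_of_real ((if a = d then 2 else 0) - 2 / real n) = (if a = d then 2 else 0) - 2 / of_nat n"
    by simp
  show ?thesis unfolding g_def[symmetric] main ofr T_def PP_def using abcd
    by auto
qed


lemma gm_sum_entry:
  assumes R: "R \<in> carrier_mat n n" and ab: "a < n" "b < n"
  shows "(\<Sum>X\<in>gell_mann n. (X * R * X) $$ (a, b)) =
     (if a = b then 2 * mtrace R else 0) - 2 / of_nat n * R $$ (a, b)"
proof -
  have "(\<Sum>X\<in>gell_mann n. (X * R * X) $$ (a, b)) =
      (\<Sum>X\<in>gell_mann n. \<Sum>c<n. \<Sum>d<n. X $$ (a, c) * R $$ (c, d) * X $$ (d, b))"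
    by (rule sum.cong[OF refl]) (rule mult3_entry[OF gell_mann_carrier R ab])
  also have "\<dots> = (\<Sum>c<n. \<Sum>X\<in>gell_mann n. \<Sum>d<n. X $$ (a, c) * R $$ (c, d) * X $$ (d, b))"
    by (rule sum.swap)
  also have "\<dots> = (\<Sum>c<n. \<Sum>d<n. \<Sum>X\<in>gell_mann n. X $$ (a, c) * R $$ (c, d) * X $$ (d, b))"
    by (rule sum.cong[OF refl]) (rule sum.swap)
  also have "\<dots> = (\<Sum>c<n. \<Sum>d<n. R $$ (c, d) * (\<Sum>X\<in>gell_mann n. X $$ (a, c) * X $$ (d, b)))"
    by (simp add: sum_distrib_left mult.commute mult.left_commute)
  also have "\<dots> = (\<Sum>c<n. \<Sum>d<n. (if d = c then (if a = b then 2 * R $$ (c, c) else 0) else 0)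
       - (if d = b then (if c = a then 2 / of_nat n * R $$ (a, b) else 0) else 0))"
  proof (intro sum.cong refl)
    fix c d assume "c \<in> {..<n}" "d \<in> {..<n}"
    then have cd: "c < n" "d < n" by auto
    show "R $$ (c, d) * (\<Sum>X\<in>gell_mann n. X $$ (a, c) * X $$ (d, b)) =
      (if d = c then (if a = b then 2 * R $$ (c, c) else 0) else 0)
       - (if d = b then (if c = a then 2 / of_nat n * R $$ (a, b) else 0) else 0)"
      unfolding gm_complete[OF ab(1) ab(2) cd] by (auto simp: algebra_simps)
  qed
  also have "\<dots> = (\<Sum>c<n. (if a = b then 2 * R $$ (c, c) else 0) - (if c = a then 2 / of_nat n * R $$ (a, b) else 0))"
    using ab by (simp add: sum_subtractf sum.delta')
  also have "\<dots> = (if a = b then 2 * mtrace R else 0) - 2 / of_nat n * R $$ (a, b)"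
    using ab R by (simp add: sum_subtractf sum.delta' mtrace_def sum_distrib_left)
  finally show ?thesis .
qed

lemma su_channel_eq:
  assumes n: "n \<ge> 2" and R: "R \<in> carrier_mat n n" and tr: "mtrace R = 1"
  shows "su_channel n p R = complex_of_real (1 - p - p / (real n ^ 2 - 1)) \<cdot>\<^sub>m R
     + complex_of_real (real n * p / (real n ^ 2 - 1)) \<cdot>\<^sub>m 1\<^sub>m n"
proof (rule eq_matI)
  show "dim_row (su_channel n p R) = dim_row (complex_of_real (1 - p - p / (real n ^ 2 - 1)) \<cdot>\<^sub>m R
     + complex_of_real (real n * p / (real n ^ 2 - 1)) \<cdot>\<^sub>m 1\<^sub>m n)" using R by (simp add: su_channel_def)
  show "dim_col (su_channel n p R) = dim_col (complex_of_real (1 - p - p / (real n ^ 2 - 1)) \<cdot>\<^sub>m R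
     + complex_of_real (real n * p / (real n ^ 2 - 1)) \<cdot>\<^sub>m 1\<^sub>m n)" using R by (simp add: su_channel_def)
  fix a b assume "a < dim_row (complex_of_real (1 - p - p / (real n ^ 2 - 1)) \<cdot>\<^sub>m R
     + complex_of_real (real n * p / (real n ^ 2 - 1)) \<cdot>\<^sub>m 1\<^sub>m n)"
    "b < dim_col (complex_of_real (1 - p - p / (real n ^ 2 - 1)) \<cdot>\<^sub>m R
     + complex_of_real (real n * p / (real n ^ 2 - 1)) \<cdot>\<^sub>m 1\<^sub>m n)"
  then have ab: "a < n" "b < n" using R by auto
  define c where "c = p * real n / (2 * (real n ^ 2 - 1))"
  have n2: "real n \<ge> 2" using n by simp
  have "(2::real) ^ 2 \<le> real n ^ 2" by (rule power_mono[OF n2]) simp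
  then have nz: "real n \<noteq> 0" "real n ^ 2 - 1 \<noteq> 0" using n2 by auto
  have r1: "c * 2 = real n * p / (real n ^ 2 - 1)" unfolding c_def using nz by (simp add: field_simps)
  have r2: "c * (2 / real n) = p / (real n ^ 2 - 1)" unfolding c_def using nz by (simp add: field_simps)
  have c1: "complex_of_real c * 2 = complex_of_real (real n * p / (real n ^ 2 - 1))"
    by (simp only: r1[symmetric] of_real_mult) simp
  have c2: "complex_of_real c * (2 / of_nat n) = complex_of_real (p / (real n ^ 2 - 1))"
    by (simp only: r2[symmetric] of_real_mult of_real_divide) simp
  have lhs: "su_channel n p R $$ (a, b) = complex_of_real (1 - p) * R $$ (a, b)
      + complex_of_real c * ((if a = b then 2 else 0) - 2 / of_nat n * R $$ (a, b))"
    using ab R tr unfolding su_channel_def c_def by (simp add: gm_sum_entry)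
  also have "\<dots> = complex_of_real (1 - p) * R $$ (a, b) + (if a = b then complex_of_real c * 2 else 0)
      - complex_of_real c * (2 / of_nat n) * R $$ (a, b)"
    by (simp add: algebra_simps)
  also have "\<dots> = complex_of_real (1 - p) * R $$ (a, b) + (if a = b then complex_of_real (real n * p / (real n ^ 2 - 1)) else 0)
      - complex_of_real (p / (real n ^ 2 - 1)) * R $$ (a, b)"
    unfolding c1 c2 ..
  also have "\<dots> = complex_of_real (1 - p - p / (real n ^ 2 - 1)) * R $$ (a, b) + (if a = b then complex_of_real (real n * p / (real n ^ 2 - 1)) else 0)"
    by (simp add: algebra_simps)
  finally show "su_channel n p R $$ (a, b) = (complex_of_real (1 - p - p / (real n ^ 2 - 1)) \<cdot>\<^sub>m R
     + complex_of_real (real n * p / (real n ^ 2 - 1)) \<cdot>\<^sub>m 1\<^sub>m n) $$ (a, b)"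
    using ab R by simp
qed


lemma sum_list_map_upt: "sum_list (map f [0..<n]) = (\<Sum>i<n. f i)"
  by (induction n) simp_all

lemma mtrace_comm:
  assumes A: "A \<in> carrier_mat n n" and B: "B \<in> carrier_mat n n"
  shows "mtrace (A * B) = mtrace (B * A)"
proof -
  have "mtrace (A * B) = (\<Sum>i<n. \<Sum>k<n. A $$ (i, k) * B $$ (k, i))"
    unfolding mtrace_def using A B by (auto intro!: sum.cong simp: scalar_prod_def lessThan_atLeast0)
  also have "\<dots> = (\<Sum>k<n. \<Sum>i<n. A $$ (i, k) * B $$ (k, i))" by (rule sum.swap)
  also have "\<dots> = mtrace (B * A)"
    unfolding mtrace_def using A B by (auto intro!: sum.cong simp: scalar_prod_def lessThan_atLeast0 mult.commute)
  finally show ?thesis .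
qed

lemma proots_linear_prod: "proots (\<Prod>a\<leftarrow>ys. [:- a, 1:]) = mset (ys :: complex list)"
proof (induction ys)
  case Nil then show ?case by simp
next
  case (Cons y ys)
  have nz: "(\<Prod>a\<leftarrow>ys. [:- a, 1:]) \<noteq> (0 :: complex poly)"
    by (auto simp: prod_list_zero_iff)
  have "proots (\<Prod>a\<leftarrow>y # ys. [:- a, 1:]) = proots ([:- y, 1:] * (\<Prod>a\<leftarrow>ys. [:- a, 1:]))" by simp
  also have "\<dots> = proots [:- y, 1:] + proots (\<Prod>a\<leftarrow>ys. [:- a, 1:])"
    by (rule proots_mult) (use nz in auto)
  finally show ?case using Cons by simp
qed

lemma schur_facts:
  assumes R: "R \<in> carrier_mat n n" and cp: "char_poly R = (\<Prod>a\<leftarrow>es. [:- a, 1:])"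
  shows "mtrace R = sum_list es"
    and "char_poly (complex_of_real al \<cdot>\<^sub>m R + complex_of_real be \<cdot>\<^sub>m 1\<^sub>m n)
           = (\<Prod>a\<leftarrow>map (\<lambda>a. complex_of_real al * a + complex_of_real be) es. [:- a, 1:])"
proof -
  obtain B P Q where sd: "schur_decomposition R es = (B, P, Q)" by (cases "schur_decomposition R es") auto
  from schur_decomposition[OF R cp sd] have sw: "similar_mat_wit R B P Q" and ut: "upper_triangular B"
    and dg: "diag_mat B = es" by auto
  from sw R have Bc: "B \<in> carrier_mat n n" and Pc: "P \<in> carrier_mat n n" and Qc: "Q \<in> carrier_mat n n"
    and PQ: "P * Q = 1\<^sub>m n" and QP: "Q * P = 1\<^sub>m n" and RPBQ: "R = P * B * Q"
    unfolding similar_mat_wit_def Let_def by auto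
  have "mtrace R = mtrace ((P * B) * Q)" using RPBQ by simp
  also have "\<dots> = mtrace (Q * (P * B))" by (rule mtrace_comm) (use Pc Bc Qc in auto)
  also have "Q * (P * B) = (Q * P) * B" using Pc Bc Qc by (simp add: assoc_mult_mat)
  also have "\<dots> = B" using QP Bc by simp
  also have "mtrace B = sum_list es" unfolding dg[symmetric] diag_mat_def mtrace_def sum_list_map_upt
    by simp
  finally show "mtrace R = sum_list es" .
  define al' where "al' = complex_of_real al"
  define be' where "be' = complex_of_real be"
  define M where "M = al' \<cdot>\<^sub>m B + be' \<cdot>\<^sub>m 1\<^sub>m n"
  have Mc: "M \<in> carrier_mat n n" unfolding M_def using Bc by simp
  have utM: "upper_triangular M" using ut Bc unfolding M_def upper_triangular_def by auto
  have dM: "diag_mat M = map (\<lambda>a. al' * a + be') es"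
    unfolding dg[symmetric] diag_mat_def M_def using Bc by auto
  have "P * M * Q = P * (al' \<cdot>\<^sub>m B) * Q + P * (be' \<cdot>\<^sub>m 1\<^sub>m n) * Q"
  proof -
    have X: "al' \<cdot>\<^sub>m B \<in> carrier_mat n n" "be' \<cdot>\<^sub>m 1\<^sub>m n \<in> carrier_mat n n" using Bc by auto
    have "P * M = P * (al' \<cdot>\<^sub>m B) + P * (be' \<cdot>\<^sub>m 1\<^sub>m n)"
      unfolding M_def by (rule mult_add_distrib_mat[OF Pc X])
    moreover have "(P * (al' \<cdot>\<^sub>m B) + P * (be' \<cdot>\<^sub>m 1\<^sub>m n)) * Q = P * (al' \<cdot>\<^sub>m B) * Q + P * (be' \<cdot>\<^sub>m 1\<^sub>m n) * Q"
      by (rule add_mult_distrib_mat[of _ n n _ _ n]) (use Pc X Qc in auto)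
    ultimately show ?thesis by simp
  qed
  also have "\<dots> = al' \<cdot>\<^sub>m (P * B * Q) + be' \<cdot>\<^sub>m (P * Q)"
    using Pc Bc Qc by (simp add: mult_smult_distrib[of _ n n _ n] mult_smult_assoc_mat[of _ n n _ n])
  also have "\<dots> = al' \<cdot>\<^sub>m R + be' \<cdot>\<^sub>m 1\<^sub>m n" using RPBQ PQ by simp
  finally have eq: "al' \<cdot>\<^sub>m R + be' \<cdot>\<^sub>m 1\<^sub>m n = P * M * Q" ..
  have "similar_mat_wit (al' \<cdot>\<^sub>m R + be' \<cdot>\<^sub>m 1\<^sub>m n) M P Q"
    unfolding similar_mat_wit_def Let_def using Mc Pc Qc PQ QP eq R by auto
  then have "char_poly (al' \<cdot>\<^sub>m R + be' \<cdot>\<^sub>m 1\<^sub>m n) = char_poly M"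
    by (intro char_poly_similar) (auto simp: similar_mat_def)
  also have "\<dots> = (\<Prod>a\<leftarrow>diag_mat M. [:- a, 1:])" by (rule char_poly_upper_triangular[OF Mc utM])
  finally show "char_poly (complex_of_real al \<cdot>\<^sub>m R + complex_of_real be \<cdot>\<^sub>m 1\<^sub>m n)
           = (\<Prod>a\<leftarrow>map (\<lambda>a. complex_of_real al * a + complex_of_real be) es. [:- a, 1:])"
    unfolding dM al'_def be'_def .
qed

lemma psd_root_Re_nonneg:
  assumes P: "psd_mat n R" and cp: "char_poly R = (\<Prod>a\<leftarrow>es. [:- a, 1:])" and x: "x \<in> set es"
  shows "Re x \<ge> 0"
proof -
  have R: "R \<in> carrier_mat n n" using P unfolding psd_mat_def by auto
  have "poly (char_poly R) x = 0" unfolding cp poly_prod_list using x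
    by (auto simp: prod_list_zero_iff)
  then have "eigenvalue R x" using eigenvalue_root_char_poly[OF R] by simp
  then obtain v where v: "v \<in> carrier_vec n" "v \<noteq> 0\<^sub>v n" "R *\<^sub>v v = x \<cdot>\<^sub>v v"
    unfolding eigenvalue_def eigenvector_def using R by auto
  have "0 \<le> Re (conjugate v \<bullet> (R *\<^sub>v v))" using P v unfolding psd_mat_def by auto
  also have "conjugate v \<bullet> (R *\<^sub>v v) = x * (conjugate v \<bullet> v)" using v by simp
  also have "conjugate v \<bullet> v = v \<bullet>c v" using conjugate_vec_sprod_comm[OF v(1) v(1)] by simp
  finally have le: "0 \<le> Re (x * (v \<bullet>c v))" .
  have "v \<bullet>c v > 0" using v by simp
  then have pos: "Re (v \<bullet>c v) > 0" "Im (v \<bullet>c v) = 0" by (auto simp: less_complex_def)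
  have "Re (x * (v \<bullet>c v)) = Re x * Re (v \<bullet>c v)" using pos by simp
  with le pos show ?thesis by (simp add: zero_le_mult_iff)
qed


lemma xlnx_tangent:
  assumes z: "z > 0" and w: "w \<ge> 0"
  shows "z * ln z + (ln z + 1) * (w - z) \<le> xlnx w"
proof (cases "w = 0")
  case True then show ?thesis using z by (simp add: xlnx_def algebra_simps)
next
  case False
  then have wp: "w > 0" using w by simp
  have "ln (z / w) \<le> z / w - 1" by (rule ln_le_minus_one) (use z wp in simp)
  then have "ln z - ln w \<le> z / w - 1" using z wp by (simp add: ln_div)
  then have "w * (ln z - ln w) \<le> w * (z / w - 1)" using wp by (simp add: mult_left_mono)
  then have "w * ln z - w * ln w \<le> z - w" using wp by (simp add: algebra_simps)
  then show ?thesis using wp by (simp add: xlnx_def algebra_simps)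
qed

lemma xlnx_convex:
  assumes x: "x \<ge> 0" and y: "y \<ge> 0" and t: "0 \<le> t" "t \<le> 1"
  shows "xlnx (t * x + (1 - t) * y) \<le> t * xlnx x + (1 - t) * xlnx y"
proof -
  define z where "z = t * x + (1 - t) * y"
  have xl: "xlnx x \<ge> x * ln x" "xlnx y \<ge> y * ln y" by (auto simp: xlnx_def)
  show ?thesis
  proof (cases "z = 0")
    case True
    then have "t * x = 0" "(1 - t) * y = 0" unfolding z_def using x y t
      by (smt (verit) mult_nonneg_nonneg)+
    then have "t * xlnx x = 0" "(1 - t) * xlnx y = 0" by (auto simp: xlnx_def)
    moreover have "xlnx (t * x + (1 - t) * y) = 0" using True unfolding z_def by (simp add: xlnx_def)
    ultimately show ?thesis by linarith
  next
    case False
    then have zp: "z > 0" unfolding z_def using x y t by (smt (verit) mult_nonneg_nonneg)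
    have 1: "t * (z * ln z + (ln z + 1) * (x - z)) \<le> t * xlnx x"
      by (rule mult_left_mono[OF xlnx_tangent[OF zp x] t(1)])
    have 2: "(1 - t) * (z * ln z + (ln z + 1) * (y - z)) \<le> (1 - t) * xlnx y"
      by (rule mult_left_mono[OF xlnx_tangent[OF zp y]]) (use t in simp)
    have "t * (z * ln z + (ln z + 1) * (x - z)) + (1 - t) * (z * ln z + (ln z + 1) * (y - z)) = z * ln z"
      unfolding z_def by (simp add: algebra_simps)
    then have "z * ln z \<le> t * xlnx x + (1 - t) * xlnx y" using 1 2 by linarith
    then show ?thesis using zp by (simp add: z_def[symmetric] xlnx_def)
  qed
qed

lemma sum_list_affine:
  "sum_list (map (\<lambda>r. r * A + (1 - r) * B) rs) = sum_list rs * A + (real (length rs) - sum_list rs) * (B :: real)"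
  by (induction rs) (simp_all add: algebra_simps)

lemma entropy_bound:
  fixes rs :: "real list"
  assumes nn: "\<forall>r\<in>set rs. r \<ge> 0" and s1: "sum_list rs = 1" and A: "A \<ge> 0" and B: "B \<ge> 0"
  shows "sum_list (map (\<lambda>r. xlnx (r * A + (1 - r) * B)) rs) \<le> xlnx A + (real (length rs) - 1) * xlnx B"
proof -
  have "sum_list (map (\<lambda>r. xlnx (r * A + (1 - r) * B)) rs) \<le> sum_list (map (\<lambda>r. r * xlnx A + (1 - r) * xlnx B) rs)"
  proof (rule sum_list_mono)
    fix r assume r: "r \<in> set rs"
    have "r \<le> sum_list rs" by (rule member_le_sum_list[OF r]) (use nn in auto)
    then have "r \<le> 1" using s1 by simp
    then show "xlnx (r * A + (1 - r) * B) \<le> r * xlnx A + (1 - r) * xlnx B"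
      using xlnx_convex[OF A B, of r] nn r by (simp add: mult.commute)
  qed
  also have "\<dots> = xlnx A + (real (length rs) - 1) * xlnx B" unfolding sum_list_affine s1 by simp
  finally show ?thesis .
qed


lemma sum_mset_mset_list: "(\<Sum>x\<in>#mset ys. f x) = sum_list (map f ys)"
  by (induction ys) auto

lemma sum_list_Re: "sum_list (map Re es) = Re (sum_list es)"
  by (induction es) auto

lemma vN_channel:
  assumes n: "n \<ge> 2" and R: "R \<in> carrier_mat n n" and tr: "mtrace R = 1"
    and cp: "char_poly R = (\<Prod>a\<leftarrow>es. [:- a, 1:])"
  shows "vN_entropy (su_channel n p R) = - sum_list (map (\<lambda>r. xlnx (r * ((1 - p - p / (real n ^ 2 - 1)) + real n * p / (real n ^ 2 - 1))
      + (1 - r) * (real n * p / (real n ^ 2 - 1)))) (map Re es))"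
proof -
  define al where "al = 1 - p - p / (real n ^ 2 - 1)"
  define be where "be = real n * p / (real n ^ 2 - 1)"
  have ev: "eigenvalues_mset (su_channel n p R) = mset (map (\<lambda>a. complex_of_real al * a + complex_of_real be) es)"
    unfolding eigenvalues_mset_def su_channel_eq[OF n R tr] al_def[symmetric] be_def[symmetric]
      schur_facts(2)[OF R cp] proots_linear_prod ..
  have "vN_entropy (su_channel n p R) = - sum_list (map (\<lambda>x. xlnx (Re x)) (map (\<lambda>a. complex_of_real al * a + complex_of_real be) es))"
    unfolding vN_entropy_def ev sum_mset_mset_list ..
  also have "\<dots> = - sum_list (map (\<lambda>r. xlnx (r * (al + be) + (1 - r) * be)) (map Re es))"
    by (simp add: o_def algebra_simps)
  finally show ?thesis unfolding al_def be_def .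
qed

definition rho0 :: "nat \<Rightarrow> complex mat" where
  "rho0 n = mat n n (\<lambda>(i, j). if i = 0 \<and> j = 0 then 1 else 0)"

lemma rho0_density: "n \<ge> 1 \<Longrightarrow> density_mat n (rho0 n)"
proof -
  assume n: "n \<ge> 1"
  have c: "rho0 n \<in> carrier_mat n n" unfolding rho0_def by simp
  have adj: "mat_adjoint (rho0 n) = rho0 n"
    unfolding mat_adjoint_def rho0_def by (rule eq_matI) (auto simp: mat_of_rows_index)
  have q: "0 \<le> Re (conjugate v \<bullet> (rho0 n *\<^sub>v v))" if v: "v \<in> carrier_vec n" for v
  proof -
    have mv: "rho0 n *\<^sub>v v = vec n (\<lambda>i. if i = 0 then v $ 0 else 0)"
    proof (rule eq_vecI)
      fix i assume "i < dim_vec (vec n (\<lambda>i. if i = 0 then v $ 0 else 0))"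
      then have i: "i < n" by simp
      have "(rho0 n *\<^sub>v v) $ i = (\<Sum>j<n. (if i = 0 \<and> j = 0 then 1 else 0) * v $ j)"
        using i v unfolding rho0_def by (simp add: mult_mat_vec_def scalar_prod_def lessThan_atLeast0)
      also have "\<dots> = (if i = 0 then v $ 0 else 0)"
        using n by (simp add: if_distrib[of "\<lambda>x. x * _"] sum.delta' cong: if_cong)
      finally show "(rho0 n *\<^sub>v v) $ i = vec n (\<lambda>i. if i = 0 then v $ 0 else 0) $ i" using i by simp
    qed (use v in \<open>simp add: rho0_def\<close>)
    have "conjugate v \<bullet> (rho0 n *\<^sub>v v) = (\<Sum>i<n. cnj (v $ i) * (if i = 0 then v $ 0 else 0))"
      unfolding mv using v by (simp add: scalar_prod_def lessThan_atLeast0)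
    also have "\<dots> = cnj (v $ 0) * v $ 0"
      using n by (simp add: if_distrib[of "\<lambda>x. _ * x"] sum.delta' cong: if_cong)
    finally show ?thesis by simp
  qed
  have tr: "mtrace (rho0 n) = 1"
    unfolding mtrace_def rho0_def using n by (simp add: sum.delta' cong: if_cong)
  show ?thesis unfolding density_mat_def psd_mat_def using c adj q tr by auto
qed


lemma per_n:
  fixes p :: real
  assumes p: "0 \<le> p" "p \<le> 1" and n: "n \<ge> 2"
  shows "let q = real n * p / (real n + 1);
                F = - q * ln (real n * p / (real n ^ 2 - 1)) - (1 - q) * ln (1 - q)
            in (\<exists>\<rho>. density_mat n \<rho> \<and> vN_entropy (su_channel n p \<rho>) = F)
               \<and> (\<forall>\<rho>. density_mat n \<rho> \<longrightarrow> F \<le> vN_entropy (su_channel n p \<rho>))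
               \<and> S_min n p = F"
proof -
  define q where "q = real n * p / (real n + 1)"
  define be where "be = real n * p / (real n ^ 2 - 1)"
  define A where "A = (1 - p - p / (real n ^ 2 - 1)) + be"
  define F where "F = - q * ln be - (1 - q) * ln (1 - q)"
  have n2: "real n \<ge> 2" using n by simp
  have "(2::real) ^ 2 \<le> real n ^ 2" by (rule power_mono[OF n2]) simp
  then have d: "real n ^ 2 - 1 > 0" by simp
  have fac: "real n ^ 2 - 1 = (real n - 1) * (real n + 1)" by (simp add: algebra_simps power2_eq_square)
  have be0: "be \<ge> 0" unfolding be_def using p d by simp
  have h1: "real n - 1 \<noteq> 0" using n2 by simp
  have qbe: "(real n - 1) * be = q" unfolding be_def q_def fac
    by (simp only: times_divide_eq_right mult_divide_mult_cancel_left[OF h1])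
  have Aq: "A = 1 - q"
  proof -
    have "(real n * p - p) / (real n ^ 2 - 1) = real n * p / (real n ^ 2 - 1) - p / (real n ^ 2 - 1)"
      by (rule diff_divide_distrib)
    then have "A = 1 - p + (real n * p - p) / (real n ^ 2 - 1)" unfolding A_def be_def by linarith
    also have "(real n * p - p) / (real n ^ 2 - 1) = ((real n - 1) * p) / ((real n - 1) * (real n + 1))"
      unfolding fac by (simp add: algebra_simps)
    also have "\<dots> = p / (real n + 1)" by (rule mult_divide_mult_cancel_left[OF h1])
    also have "1 - p + p / (real n + 1) = 1 - q" unfolding q_def using n2 by (simp add: field_simps)
    finally show ?thesis .
  qed
  have q1: "q < 1"
  proof -
    have "real n * p \<le> real n" using mult_left_mono[OF p(2), of "real n"] by simp
    then have "real n * p < 1 * (real n + 1)" unfolding mult_1_left by linarith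
    moreover have "real n + 1 > 0" by simp
    ultimately show ?thesis unfolding q_def by (simp only: pos_divide_less_eq)
  qed
  have A0: "A > 0" using Aq q1 by simp
  have FF: "F = - (xlnx A + (real n - 1) * xlnx be)"
  proof -
    have "xlnx A = (1 - q) * ln (1 - q)" using A0 Aq by (simp add: xlnx_def)
    moreover have "(real n - 1) * xlnx be = q * ln be"
    proof (cases "be = 0")
      case True then show ?thesis using qbe by (simp add: xlnx_def)
    next
      case False then show ?thesis using qbe[symmetric] by (simp add: xlnx_def)
    qed
    ultimately show ?thesis unfolding F_def by simp
  qed
  have lower: "F \<le> vN_entropy (su_channel n p \<rho>)" if dm: "density_mat n \<rho>" for \<rho>
  proof -
    have P: "psd_mat n \<rho>" and tr: "mtrace \<rho> = 1" using dm unfolding density_mat_def by auto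
    have R: "\<rho> \<in> carrier_mat n n" using P unfolding psd_mat_def by auto
    obtain es where cp: "char_poly \<rho> = (\<Prod>a\<leftarrow>es. [:- a, 1:])" and len: "length es = n"
      using char_poly_factorized[OF R] by blast
    have nn: "\<forall>r\<in>set (map Re es). r \<ge> 0" using psd_root_Re_nonneg[OF P cp] by auto
    have s1: "sum_list (map Re es) = 1" unfolding sum_list_Re schur_facts(1)[OF R cp, symmetric] tr by simp
    have "sum_list (map (\<lambda>r. xlnx (r * A + (1 - r) * be)) (map Re es)) \<le> xlnx A + (real (length (map Re es)) - 1) * xlnx be"
      by (rule entropy_bound[OF nn s1]) (use A0 be0 in auto)
    then show ?thesis unfolding vN_channel[OF n R tr cp] A_def[symmetric] be_def[symmetric] FF using len by simp
  qed
  have ex: "density_mat n (rho0 n) \<and> vN_entropy (su_channel n p (rho0 n)) = F"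
  proof -
    have dm: "density_mat n (rho0 n)" using rho0_density n by simp
    have R: "rho0 n \<in> carrier_mat n n" and tr: "mtrace (rho0 n) = 1"
      using dm unfolding density_mat_def psd_mat_def by auto
    have ut: "upper_triangular (rho0 n)" unfolding upper_triangular_def rho0_def by auto
    define es where "es = diag_mat (rho0 n)"
    have cp: "char_poly (rho0 n) = (\<Prod>a\<leftarrow>es. [:- a, 1:])"
      unfolding es_def by (rule char_poly_upper_triangular[OF R ut])
    have rs: "map Re es = map (\<lambda>i. if i = 0 then 1 else 0) [0..<n]"
      unfolding es_def diag_mat_def rho0_def by simp
    have pt: "xlnx (r * A + (1 - r) * be) = r * xlnx A + (1 - r) * xlnx be" if "r \<in> set (map Re es)" for r
    proof -
      have "r = 0 \<or> r = 1" using that unfolding rs by auto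
      then show ?thesis by auto
    qed
    have "sum_list (map (\<lambda>r. xlnx (r * A + (1 - r) * be)) (map Re es)) = sum_list (map (\<lambda>r. r * xlnx A + (1 - r) * xlnx be) (map Re es))"
      by (rule arg_cong[where f = sum_list], rule map_cong[OF refl]) (rule pt)
    also have "\<dots> = sum_list (map Re es) * xlnx A + (real (length (map Re es)) - sum_list (map Re es)) * xlnx be"
      by (rule sum_list_affine)
    also have "sum_list (map Re es) = 1" unfolding rs sum_list_map_upt using n by (simp add: sum.delta' cong: if_cong)
    also have "length (map Re es) = n" unfolding rs by simp
    finally have "sum_list (map (\<lambda>r. xlnx (r * A + (1 - r) * be)) (map Re es)) = xlnx A + (real n - 1) * xlnx be" by simp
    then show ?thesis using dm unfolding vN_channel[OF n R tr cp] A_def[symmetric] be_def[symmetric] FF by simp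
  qed
  have smin: "S_min n p = F"
    unfolding S_min_def
  proof (rule cInf_eq_minimum)
    show "F \<in> (\<lambda>\<rho>. vN_entropy (su_channel n p \<rho>)) ` {\<rho>. density_mat n \<rho>}" using ex by force
    fix x assume "x \<in> (\<lambda>\<rho>. vN_entropy (su_channel n p \<rho>)) ` {\<rho>. density_mat n \<rho>}"
    then show "F \<le> x" using lower by auto
  qed
  show ?thesis unfolding Let_def q_def[symmetric] be_def[symmetric] F_def[symmetric]
    using ex lower smin by blast
qed


lemma limit_F:
  fixes p :: real
  assumes p: "0 \<le> p" "p \<le> 1"
  shows "(\<lambda>n::nat. (- (real n * p / (real n + 1)) * ln (real n * p / (real n ^ 2 - 1))
      - (1 - real n * p / (real n + 1)) * ln (1 - real n * p / (real n + 1))) / ln (real n)) \<longlonglongrightarrow> p"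
proof -
  consider "p = 0" | "p = 1" | "0 < p \<and> p < 1" using p by linarith
  then show ?thesis
  proof cases
    case 1 then show ?thesis by simp
  next
    case 2 then show ?thesis by simp real_asymp
  next
    case 3
    then have "0 < p" "p < 1" by auto
    then show ?thesis by real_asymp
  qed
qed

theorem mainTheorem3:
  fixes p :: real
  assumes "0 \<le> p" and "p \<le> 1"
  shows "(\<forall>n::nat. n \<ge> 2 \<longrightarrow>
           (let q = real n * p / (real n + 1);
                F = - q * ln (real n * p / (real n ^ 2 - 1)) - (1 - q) * ln (1 - q)
            in (\<exists>\<rho>. density_mat n \<rho> \<and> vN_entropy (su_channel n p \<rho>) = F)
               \<and> (\<forall>\<rho>. density_mat n \<rho> \<longrightarrow> F \<le> vN_entropy (su_channel n p \<rho>))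
               \<and> S_min n p = F))
         \<and> ((\<lambda>n. S_min n p / ln (real n)) \<longlonglongrightarrow> p)"
proof
  show "\<forall>n::nat. n \<ge> 2 \<longrightarrow>
           (let q = real n * p / (real n + 1);
                F = - q * ln (real n * p / (real n ^ 2 - 1)) - (1 - q) * ln (1 - q)
            in (\<exists>\<rho>. density_mat n \<rho> \<and> vN_entropy (su_channel n p \<rho>) = F)
               \<and> (\<forall>\<rho>. density_mat n \<rho> \<longrightarrow> F \<le> vN_entropy (su_channel n p \<rho>))
               \<and> S_min n p = F)"
    using per_n[OF assms] by blast
  have ev: "eventually (\<lambda>n. (- (real n * p / (real n + 1)) * ln (real n * p / (real n ^ 2 - 1))
      - (1 - real n * p / (real n + 1)) * ln (1 - real n * p / (real n + 1))) / ln (real n) = S_min n p / ln (real n)) sequentially"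
    unfolding eventually_sequentially
  proof (intro exI allI impI)
    fix n :: nat assume "2 \<le> n"
    then show "(- (real n * p / (real n + 1)) * ln (real n * p / (real n ^ 2 - 1))
      - (1 - real n * p / (real n + 1)) * ln (1 - real n * p / (real n + 1))) / ln (real n) = S_min n p / ln (real n)"
      using per_n[OF assms, of n] unfolding Let_def by simp
  qed
  show "(\<lambda>n. S_min n p / ln (real n)) \<longlonglongrightarrow> p"
    using tendsto_cong[OF ev] limit_F[OF assms] by simp
qed

end
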